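(* Let $X = X_1 \times \dots \times X_d$ be a product of finite sets, and let $\big((\overline{Y}_S, \overline{Y}^{\,\circ}_S, F_S, A_S)\,:\, S \subseteq [d]\big)$ be an additive-restrictive system on $X$. Let $\delta$ be the density of $\overline{Y}^{\,\circ}_{\emptyset}$ in $X$, and let $|A|$ be the maximum of $|A_S|$ over $S\subseteq[d]$. Then for every $S \subseteq [d]$, the density of $\overline{Y}^{\,\circ}_{S}$ in $\overline{X}_{S}$ is at least $\delta^{2^{|S|}}|A|^{-3^{|S|}}$.
   Context: $[d]=\{1,\dots,d\}$. For $S \subseteq [d]$, $\overline{X}_S = \prod_{i=1}^d W_i$ where $W_i = X_i\times X_i$ if $i \in S$ and $W_i = X_i$ otherwise; $\pi_i$ is projection to the $i$-th factor, and on $X_i\times X_i$ the two projections are $\pi_0,\pi_1$. For $S_0\subseteq[d]$, $\pi_{S_0}$ is projection to the factors indexed by $S_0$. For $\bar x\in\overline{X}_S$ and $T\subseteq S$, with $U=S-T$, set $\widehat{x}(T)=\{\bar y\in\overline{X}_T : \pi_i(\bar y)\in\{\pi_0(\pi_i(\bar x)),\pi_1(\pi_i(\bar x))\}\text{ for } i\in U,\ \pi_{[d]-U}(\bar y)=\pi_{[d]-U}(\bar x)\}$. An additive-restrictive system is a family $(\overline{Y}_S,\overline{Y}^{\,\circ}_S,F_S,A_S)_{S\subseteq[d]}$ such that: each $A_S$ is an abelian group, $\overline{Y}^{\,\circ}_S\subseteq\overline{Y}_S\subseteq\overline{X}_S$, and $F_S:\overline{Y}_S\to A_S$ is a function with $F_S^{-1}(0)=\overline{Y}^{\,\circ}_S$;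 for nonempty $S$, $\overline{Y}_S=\{\bar x\in\overline{X}_S:\widehat{x}(T)\subseteq\overline{Y}^{\,\circ}_T\text{ for all } T\subsetneq S\}$; and (additivity) whenever $s\in S$ and $\bar x_1,\bar x_2,\bar x_3\in\overline{Y}_S$ agree in all coordinates other than $s$ and satisfy $\pi_s(\bar x_1)=(p_1,p_2)$, $\pi_s(\bar x_2)=(p_2,p_3)$, $\pi_s(\bar x_3)=(p_1,p_3)$ for some $p_1,p_2,p_3\in X_s$, we have $F_S(\bar x_1)+F_S(\bar x_2)=F_S(\bar x_3)$. *)

theory Defs
  imports Complex_Main "HOL-Algebra.Group"
begin

text \<open>A point of Xbar_S is an extensional function on {1..d}: coordinate i carries
  Inl a (a in X i) if i is not in S, and Inr (a,b) (a,b in X i) if i is in S.\<close>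

definition Xbar :: "nat \<Rightarrow> (nat \<Rightarrow> 'a set) \<Rightarrow> nat set \<Rightarrow> (nat \<Rightarrow> 'a + 'a \<times> 'a) set" where
  "Xbar d X S = PiE {1..d} (\<lambda>i. if i \<in> S then Inr ` (X i \<times> X i) else Inl ` X i)"

definition xhat :: "nat \<Rightarrow> (nat \<Rightarrow> 'a set) \<Rightarrow> nat set \<Rightarrow> (nat \<Rightarrow> 'a + 'a \<times> 'a)
    \<Rightarrow> nat set \<Rightarrow> (nat \<Rightarrow> 'a + 'a \<times> 'a) set" where
  "xhat d X S x T = {y \<in> Xbar d X T.
      (\<forall>i \<in> S - T. \<exists>p. x i = Inr p \<and> (y i = Inl (fst p) \<or> y i = Inl (snd p))) \<and>
      (\<forall>i \<in> {1..d} - (S - T). y i = x i)}"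

definition additive_restrictive_system ::
  "nat \<Rightarrow> (nat \<Rightarrow> 'a set) \<Rightarrow> (nat set \<Rightarrow> (nat \<Rightarrow> 'a + 'a \<times> 'a) set)
   \<Rightarrow> (nat set \<Rightarrow> (nat \<Rightarrow> 'a + 'a \<times> 'a) set)
   \<Rightarrow> (nat set \<Rightarrow> (nat \<Rightarrow> 'a + 'a \<times> 'a) \<Rightarrow> 'b)
   \<Rightarrow> (nat set \<Rightarrow> 'b monoid) \<Rightarrow> bool" where
  "additive_restrictive_system d X Y Yo F A \<longleftrightarrow>
     (\<forall>S \<subseteq> {1..d}.
        comm_group (A S) \<and>
        Yo S \<subseteq> Y S \<and> Y S \<subseteq> Xbar d X S \<and>
        F S \<in> Y S \<rightarrow> carrier (A S) \<and>
        {x \<in> Y S. F S x = \<one>\<^bsub>A S\<^esub>} = Yo S \<and>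
        (S \<noteq> {} \<longrightarrow> Y S = {x \<in> Xbar d X S. \<forall>T. T \<subset> S \<longrightarrow> xhat d X S x T \<subseteq> Yo T}) \<and>
        (\<forall>s \<in> S. \<forall>x1 x2 x3 p1 p2 p3.
            x1 \<in> Y S \<longrightarrow> x2 \<in> Y S \<longrightarrow> x3 \<in> Y S \<longrightarrow>
            (\<forall>i. i \<noteq> s \<longrightarrow> x1 i = x2 i \<and> x1 i = x3 i) \<longrightarrow>
            x1 s = Inr (p1, p2) \<longrightarrow> x2 s = Inr (p2, p3) \<longrightarrow> x3 s = Inr (p1, p3) \<longrightarrow>
            F S x1 \<otimes>\<^bsub>A S\<^esub> F S x2 = F S x3))"

definition density :: "'c set \<Rightarrow> 'c set \<Rightarrow> real" where
  "density B C = real (card B) / real (card C)"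

end

theory Submission
  imports Defs
begin



lemma cs_sum:
  fixes g :: "'i \<Rightarrow> real"
  assumes "finite I"
  shows "(\<Sum>i\<in>I. g i)^2 \<le> real (card I) * (\<Sum>i\<in>I. (g i)^2)"
proof -
  have "0 \<le> (\<Sum>i\<in>I. \<Sum>j\<in>I. (g i - g j)^2)" by (intro sum_nonneg) auto
  also have "\<dots> = (\<Sum>i\<in>I. \<Sum>j\<in>I. (g i)^2) + (\<Sum>i\<in>I. \<Sum>j\<in>I. (g j)^2) - 2 * (\<Sum>i\<in>I. \<Sum>j\<in>I. g i * g j)"
    by (simp add: power2_diff sum_subtractf sum.distrib sum_distrib_left mult.assoc)
  also have "(\<Sum>i\<in>I. \<Sum>j\<in>I. g i * g j) = (\<Sum>i\<in>I. g i)^2"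
    by (simp add: power2_eq_square sum_product)
  also have "(\<Sum>i\<in>I. \<Sum>j\<in>I. (g i)^2) = real (card I) * (\<Sum>i\<in>I. (g i)^2)"
    by (simp add: sum_distrib_left)
  also have "(\<Sum>i\<in>I. \<Sum>j\<in>I. (g j)^2) = real (card I) * (\<Sum>i\<in>I. (g i)^2)"
    by simp
  finally show ?thesis by simp
qed

lemma cs_nat:
  fixes g :: "'i \<Rightarrow> nat"
  assumes "finite I"
  shows "(\<Sum>i\<in>I. g i)^2 \<le> card I * (\<Sum>i\<in>I. (g i)^2)"
proof -
  have "real ((\<Sum>i\<in>I. g i)^2) \<le> real (card I * (\<Sum>i\<in>I. (g i)^2))"
    using cs_sum[OF assms, of "\<lambda>i. real (g i)"] by simp
  then show ?thesis by linarith
qed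

lemma cs_label:
  assumes "finite V"
  shows "card V ^ 2 \<le> card {(a,b). a \<in> V \<and> b \<in> V \<and> L a = L b} * card (L ` V)"
proof -
  let ?C = "\<lambda>c. {v\<in>V. L v = c}"
  have eq: "{(a,b). a \<in> V \<and> b \<in> V \<and> L a = L b} = (\<Union>c\<in>L`V. ?C c \<times> ?C c)" by auto
  have "card (\<Union>c\<in>L`V. ?C c \<times> ?C c) = (\<Sum>c\<in>L`V. card (?C c \<times> ?C c))"
    using assms by (intro card_UN_disjoint) auto
  also have "\<dots> = (\<Sum>c\<in>L`V. (card (?C c))^2)" by (simp add: power2_eq_square card_cartesian_product)
  finally have 1: "card {(a,b). a \<in> V \<and> b \<in> V \<and> L a = L b} = (\<Sum>c\<in>L`V. (card (?C c))^2)"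
    using eq by simp
  have "card V = card (\<Union>c\<in>L`V. ?C c)" by (rule arg_cong[where f=card]) auto
  also have "\<dots> = (\<Sum>c\<in>L`V. card (?C c))"
    using assms by (intro card_UN_disjoint) auto
  finally have 2: "card V = (\<Sum>c\<in>L`V. card (?C c))" .
  show ?thesis unfolding 1 2 using cs_nat[of "L`V" "\<lambda>c. card (?C c)"] assms by (simp add: mult.commute)
qed

lemma refine:
  fixes L :: "'a \<Rightarrow> 'b list" and G :: "'b monoid"
  assumes finV: "finite V"
    and R0: "\<And>a b. P a b \<longleftrightarrow> a \<in> V \<and> b \<in> V \<and> L a = L b"
    and grp: "group G" and finG: "finite (carrier G)"
    and fG: "\<And>a b. P a b \<Longrightarrow> f a b \<in> carrier G"
    and add: "\<And>a b c. P a b \<Longrightarrow> P b c \<Longrightarrow> f a b \<otimes>\<^bsub>G\<^esub> f b c = f a c"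
  shows "\<exists>L'::'a \<Rightarrow> 'b list. (\<forall>a b. (P a b \<and> f a b = \<one>\<^bsub>G\<^esub>) \<longleftrightarrow> a \<in> V \<and> b \<in> V \<and> L' a = L' b)
           \<and> card (L' ` V) \<le> card (L ` V) * card (carrier G)"
proof -
  interpret group G by (rule grp)
  define rep where "rep c = (SOME v. v \<in> V \<and> L v = c)" for c
  have rep: "rep (L a) \<in> V \<and> L (rep (L a)) = L a" if "a \<in> V" for a
    unfolding rep_def by (rule someI[of _ a]) (use that in auto)
  define L' where "L' a = f (rep (L a)) a # L a" for a
  have main: "(P a b \<and> f a b = \<one>\<^bsub>G\<^esub>) \<longleftrightarrow> a \<in> V \<and> b \<in> V \<and> L' a = L' b" for a b
  proof (cases "a \<in> V \<and> b \<in> V \<and> L a = L b")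
    case True
    let ?r = "rep (L a)"
    have r: "?r \<in> V" "L ?r = L a" using rep True by auto
    have Pab: "P a b" using True R0 by auto
    have Pra: "P ?r a" using r True R0 by auto
    have e: "f ?r b = f ?r a \<otimes>\<^bsub>G\<^esub> f a b" using add[OF Pra Pab] by simp
    have "L' a = L' b \<longleftrightarrow> f ?r a = f ?r b" unfolding L'_def using True by simp
    also have "\<dots> \<longleftrightarrow> f a b = \<one>\<^bsub>G\<^esub>" unfolding e using fG[OF Pab] fG[OF Pra] by simp
    finally show ?thesis using Pab True by auto
  next
    case False
    then show ?thesis using R0[of a b] unfolding L'_def by auto
  qed
  have "L' ` V \<subseteq> (\<lambda>(g,l). g # l) ` (carrier G \<times> L ` V)"
  proof
    fix x assume "x \<in> L' ` V"
    then obtain a where a: "a \<in> V" "x = L' a" by auto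
    have "P (rep (L a)) a" using rep[OF a(1)] a R0 by auto
    then show "x \<in> (\<lambda>(g,l). g # l) ` (carrier G \<times> L ` V)"
      using fG a unfolding L'_def by force
  qed
  then have "card (L' ` V) \<le> card ((\<lambda>(g,l). g # l) ` (carrier G \<times> L ` V))"
    using finV finG by (intro card_mono) auto
  also have "\<dots> \<le> card (carrier G \<times> L ` V)" by (rule card_image_le) (use finV finG in auto)
  also have "\<dots> = card (L ` V) * card (carrier G)" by (simp add: card_cartesian_product)
  finally show ?thesis using main by blast
qed

lemma chain:
  fixes V :: "'a set" and D :: "'d set" and Q :: "'d \<Rightarrow> 'a \<Rightarrow> 'a \<Rightarrow> bool"
    and prec :: "'d \<Rightarrow> 'd \<Rightarrow> bool" and rk :: "'d \<Rightarrow> nat"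
    and G :: "'d \<Rightarrow> 'b monoid" and f :: "'d \<Rightarrow> 'a \<Rightarrow> 'a \<Rightarrow> 'b"
  assumes finV: "finite V" and finD: "finite D"
    and rk: "\<And>x y. x \<in> D \<Longrightarrow> y \<in> D \<Longrightarrow> prec x y \<Longrightarrow> rk x < rk y"
    and grp: "\<And>x. x \<in> D \<Longrightarrow> group (G x)"
    and finG: "\<And>x. x \<in> D \<Longrightarrow> finite (carrier (G x))"
    and cardG: "\<And>x. x \<in> D \<Longrightarrow> card (carrier (G x)) \<le> M"
    and key: "\<And>x a b. x \<in> D \<Longrightarrow> a \<in> V \<Longrightarrow> b \<in> V \<Longrightarrow> (\<forall>y\<in>D. prec y x \<longrightarrow> Q y a b) \<Longrightarrow>
               f x a b \<in> carrier (G x) \<and> (Q x a b \<longleftrightarrow> f x a b = \<one>\<^bsub>G x\<^esub>)"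
    and add: "\<And>x a b c. x \<in> D \<Longrightarrow> a \<in> V \<Longrightarrow> b \<in> V \<Longrightarrow> c \<in> V \<Longrightarrow>
               (\<forall>y\<in>D. prec y x \<longrightarrow> Q y a b \<and> Q y b c \<and> Q y a c) \<Longrightarrow>
               f x a b \<otimes>\<^bsub>G x\<^esub> f x b c = f x a c"
  shows "\<exists>L::'a \<Rightarrow> 'b list. (\<forall>a b. (a \<in> V \<and> b \<in> V \<and> (\<forall>x\<in>D. Q x a b)) \<longleftrightarrow> (a \<in> V \<and> b \<in> V \<and> L a = L b))
            \<and> card (L ` V) \<le> M ^ card D"
proof -
  have gen: "\<And>E. card E = n \<Longrightarrow> E \<subseteq> D \<Longrightarrow> (\<forall>x\<in>E. \<forall>y\<in>D. prec y x \<longrightarrow> y \<in> E) \<Longrightarrow>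
     \<exists>L::'a \<Rightarrow> 'b list. (\<forall>a b. (a \<in> V \<and> b \<in> V \<and> (\<forall>x\<in>E. Q x a b)) \<longleftrightarrow> (a \<in> V \<and> b \<in> V \<and> L a = L b))
            \<and> card (L ` V) \<le> M ^ card E" for n
  proof (induction n)
    case 0
    then have "E = {}" using finD finite_subset by fastforce
    then show ?case
      by (intro exI[of _ "\<lambda>_. []"]) (auto intro: order_trans[OF card_image_le] simp: image_constant_conv)
  next
    case (Suc n)
    have finE: "finite E" using Suc.prems finD finite_subset by blast
    have ne: "E \<noteq> {}" using Suc.prems by auto
    obtain x where x: "x \<in> E" "rk x = Max (rk ` E)"
    proof -
      have "Max (rk ` E) \<in> rk ` E" using finE ne by (intro Max_in) auto
      then show ?thesis using that by auto
    qed
    have xmax: "\<not> prec x z" if "z \<in> E" for z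
    proof
      assume "prec x z"
      moreover have "x \<in> D" "z \<in> D" using x that Suc.prems(2) by auto
      ultimately have "rk x < rk z" using rk by blast
      moreover have "rk z \<le> Max (rk ` E)" using finE that by (intro Max_ge) auto
      ultimately show False using x by simp
    qed
    let ?E = "E - {x}"
    have cE: "card ?E = n" using Suc.prems x finE by simp
    have dc: "\<forall>z\<in>?E. \<forall>y\<in>D. prec y z \<longrightarrow> y \<in> ?E"
      using Suc.prems(3) xmax by auto
    have subE: "?E \<subseteq> D" using Suc.prems(2) by auto
    obtain L :: "'a \<Rightarrow> 'b list" where L: "\<forall>a b. (a \<in> V \<and> b \<in> V \<and> (\<forall>z\<in>?E. Q z a b)) \<longleftrightarrow> (a \<in> V \<and> b \<in> V \<and> L a = L b)"
      and cL: "card (L ` V) \<le> M ^ card ?E"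
      using Suc.IH[OF cE subE dc] by blast
    define P where "P a b \<longleftrightarrow> a \<in> V \<and> b \<in> V \<and> (\<forall>z\<in>?E. Q z a b)" for a b
    have xD: "x \<in> D" using x Suc.prems by auto
    have below: "y \<in> ?E" if "y \<in> D" "prec y x" for y
    proof -
      have "rk y < rk x" by (rule rk[OF that(1) xD that(2)])
      then have "y \<noteq> x" by auto
      moreover have "y \<in> E" using Suc.prems(3) x(1) that by blast
      ultimately show ?thesis by blast
    qed
    have R0: "P a b \<longleftrightarrow> a \<in> V \<and> b \<in> V \<and> L a = L b" for a b using L unfolding P_def by blast
    have kk: "f x a b \<in> carrier (G x) \<and> (Q x a b \<longleftrightarrow> f x a b = \<one>\<^bsub>G x\<^esub>)" if "P a b" for a b
      using key[OF xD] that below unfolding P_def by blast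
    have ad: "f x a b \<otimes>\<^bsub>G x\<^esub> f x b c = f x a c" if "P a b" "P b c" for a b c
    proof -
      have "P a c" using that R0 by auto
      then show ?thesis using add[OF xD] that below unfolding P_def by blast
    qed
    obtain L' :: "'a \<Rightarrow> 'b list" where L': "\<forall>a b. (P a b \<and> f x a b = \<one>\<^bsub>G x\<^esub>) \<longleftrightarrow> a \<in> V \<and> b \<in> V \<and> L' a = L' b"
      and cL': "card (L' ` V) \<le> card (L ` V) * card (carrier (G x))"
      using refine[OF finV R0 grp[OF xD] finG[OF xD], of "f x"] kk ad by blast
    show ?case
    proof (intro exI[of _ L'] conjI allI)
      fix a b
      have "(a \<in> V \<and> b \<in> V \<and> (\<forall>z\<in>E. Q z a b)) \<longleftrightarrow> (P a b \<and> Q x a b)"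
        unfolding P_def using x by blast
      also have "\<dots> \<longleftrightarrow> (P a b \<and> f x a b = \<one>\<^bsub>G x\<^esub>)" using kk by blast
      finally show "(a \<in> V \<and> b \<in> V \<and> (\<forall>z\<in>E. Q z a b)) \<longleftrightarrow> (a \<in> V \<and> b \<in> V \<and> L' a = L' b)"
        using L' by blast
    next
      have "card (L' ` V) \<le> M ^ n * M"
        using cL' cL cE cardG[OF xD] by (meson le_trans mult_le_mono)
      then show "card (L' ` V) \<le> M ^ card E" using Suc.prems(1) by (simp add: mult.commute)
    qed
  qed
  show ?thesis using gen[OF refl, of D] by blast
qed




definition face :: "nat set \<Rightarrow> nat \<Rightarrow> (nat \<Rightarrow> 'a + 'a \<times> 'a) \<Rightarrow> (nat \<Rightarrow> nat) \<Rightarrow> 'a \<Rightarrow> 'a \<Rightarrow> (nat \<Rightarrow> 'a + 'a \<times> 'a)" where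
  "face S' s w \<delta> a b = (\<lambda>i. if i \<in> S' then (if \<delta> i = 0 then Inl (fst (projr (w i)))
      else if \<delta> i = 1 then Inl (snd (projr (w i))) else w i)
     else if i = s then Inr (a,b) else w i)"

definition Tset :: "nat set \<Rightarrow> (nat \<Rightarrow> nat) \<Rightarrow> nat set" where
  "Tset S' \<delta> = {i\<in>S'. \<delta> i = 2}"

definition Dset :: "nat set \<Rightarrow> (nat \<Rightarrow> nat) set" where
  "Dset S' = PiE S' (\<lambda>_. {0,1,2})"

definition prec :: "nat set \<Rightarrow> (nat \<Rightarrow> nat) \<Rightarrow> (nat \<Rightarrow> nat) \<Rightarrow> bool" where
  "prec S' \<delta>' \<delta> \<longleftrightarrow> \<delta>' \<noteq> \<delta> \<and> (\<forall>i\<in>S'. \<delta> i \<noteq> 2 \<longrightarrow> \<delta>' i = \<delta> i)"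

definition Wset :: "nat \<Rightarrow> (nat \<Rightarrow> 'a set) \<Rightarrow> nat set \<Rightarrow> nat \<Rightarrow> (nat \<Rightarrow> 'a + 'a \<times> 'a) set" where
  "Wset d X S s = PiE ({1..d}-{s}) (\<lambda>i. if i \<in> S then Inr ` (X i \<times> X i) else Inl ` X i)"

lemma card_Dset: "finite S' \<Longrightarrow> card (Dset S') = 3 ^ card S'"
proof -
  have "card {0::nat,1,2} = 3" by simp
  then show "finite S' \<Longrightarrow> card (Dset S') = 3 ^ card S'" unfolding Dset_def by (simp add: card_PiE del: insert_iff)
qed

lemma finite_Dset: "finite S' \<Longrightarrow> finite (Dset S')"
  unfolding Dset_def by (simp add: finite_PiE)

lemma prec_rk: assumes "finite S'" "\<delta>' \<in> Dset S'" "\<delta> \<in> Dset S'" "prec S' \<delta>' \<delta>"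
  shows "card (Tset S' \<delta>') < card (Tset S' \<delta>)"
proof -
  have sub: "Tset S' \<delta>' \<subseteq> Tset S' \<delta>" using assms(4) unfolding Tset_def prec_def by auto
  obtain i where i: "\<delta>' i \<noteq> \<delta> i" using assms(4) unfolding prec_def by auto
  have "i \<in> S'" using i PiE_arb[of \<delta>' S'] PiE_arb[of \<delta> S'] assms(2,3) unfolding Dset_def by metis
  then have "i \<in> Tset S' \<delta>" "i \<notin> Tset S' \<delta>'" using i assms(4) unfolding prec_def Tset_def by auto
  then have "Tset S' \<delta>' \<subset> Tset S' \<delta>" using sub by auto
  moreover have "finite (Tset S' \<delta>)" using assms(1) unfolding Tset_def by auto
  ultimately show ?thesis using psubset_card_mono by blast
qed

lemma Xbar_coord:
  assumes "v \<in> Xbar d X T" "i \<in> {1..d}"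
  shows "i \<in> T \<Longrightarrow> v i \<in> Inr ` (X i \<times> X i)" and "i \<notin> T \<Longrightarrow> v i \<in> Inl ` X i"
proof -
  have "v i \<in> (if i \<in> T then Inr ` (X i \<times> X i) else Inl ` X i)"
    using assms unfolding Xbar_def PiE_iff by blast
  then show "i \<in> T \<Longrightarrow> v i \<in> Inr ` (X i \<times> X i)" and "i \<notin> T \<Longrightarrow> v i \<in> Inl ` X i" by auto
qed

lemma face_offs: "i \<noteq> s \<Longrightarrow> face S' s w \<delta> a b i = face S' s w \<delta> a' b' i"
  unfolding face_def by simp

lemma face_s: "s \<notin> S' \<Longrightarrow> face S' s w \<delta> a b s = Inr (a,b)"
  unfolding face_def by simp

context
  fixes d :: nat and X :: "nat \<Rightarrow> 'a set"
    and Y Yo :: "nat set \<Rightarrow> (nat \<Rightarrow> 'a + 'a \<times> 'a) set"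
    and F :: "nat set \<Rightarrow> (nat \<Rightarrow> 'a + 'a \<times> 'a) \<Rightarrow> 'b"
    and A :: "nat set \<Rightarrow> 'b monoid"
  assumes sys: "additive_restrictive_system d X Y Yo F A"
begin

lemma sys_at: assumes "S \<subseteq> {1..d}"
  shows "comm_group (A S) \<and>
        Yo S \<subseteq> Y S \<and> Y S \<subseteq> Xbar d X S \<and>
        F S \<in> Y S \<rightarrow> carrier (A S) \<and>
        {x \<in> Y S. F S x = \<one>\<^bsub>A S\<^esub>} = Yo S \<and>
        (S \<noteq> {} \<longrightarrow> Y S = {x \<in> Xbar d X S. \<forall>T. T \<subset> S \<longrightarrow> xhat d X S x T \<subseteq> Yo T}) \<and>
        (\<forall>s \<in> S. \<forall>x1 x2 x3 p1 p2 p3.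
            x1 \<in> Y S \<longrightarrow> x2 \<in> Y S \<longrightarrow> x3 \<in> Y S \<longrightarrow>
            (\<forall>i. i \<noteq> s \<longrightarrow> x1 i = x2 i \<and> x1 i = x3 i) \<longrightarrow>
            x1 s = Inr (p1, p2) \<longrightarrow> x2 s = Inr (p2, p3) \<longrightarrow> x3 s = Inr (p1, p3) \<longrightarrow>
            F S x1 \<otimes>\<^bsub>A S\<^esub> F S x2 = F S x3)"
proof -
  have "\<forall>S \<subseteq> {1..d}.
        comm_group (A S) \<and>
        Yo S \<subseteq> Y S \<and> Y S \<subseteq> Xbar d X S \<and>
        F S \<in> Y S \<rightarrow> carrier (A S) \<and>
        {x \<in> Y S. F S x = \<one>\<^bsub>A S\<^esub>} = Yo S \<and>
        (S \<noteq> {} \<longrightarrow> Y S = {x \<in> Xbar d X S. \<forall>T. T \<subset> S \<longrightarrow> xhat d X S x T \<subseteq> Yo T}) \<and>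
        (\<forall>s \<in> S. \<forall>x1 x2 x3 p1 p2 p3.
            x1 \<in> Y S \<longrightarrow> x2 \<in> Y S \<longrightarrow> x3 \<in> Y S \<longrightarrow>
            (\<forall>i. i \<noteq> s \<longrightarrow> x1 i = x2 i \<and> x1 i = x3 i) \<longrightarrow>
            x1 s = Inr (p1, p2) \<longrightarrow> x2 s = Inr (p2, p3) \<longrightarrow> x3 s = Inr (p1, p3) \<longrightarrow>
            F S x1 \<otimes>\<^bsub>A S\<^esub> F S x2 = F S x3)"
    using sys unfolding additive_restrictive_system_def .
  then have "S \<subseteq> {1..d} \<longrightarrow> ?thesis" by (rule spec[where x=S])
  then show ?thesis using assms by (rule mp)
qed

lemma sysS: assumes "S \<subseteq> {1..d}"
  shows "comm_group (A S)" "Yo S \<subseteq> Y S" "Y S \<subseteq> Xbar d X S" "F S \<in> Y S \<rightarrow> carrier (A S)"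
    "{x \<in> Y S. F S x = \<one>\<^bsub>A S\<^esub>} = Yo S"
proof -
  note C = sys_at[OF assms]
  show "comm_group (A S)" using C by (rule conjunct1)
  show "Yo S \<subseteq> Y S" using C by (rule conjunct2[THEN conjunct1])
  show "Y S \<subseteq> Xbar d X S" using C by (rule conjunct2[THEN conjunct2, THEN conjunct1])
  show "F S \<in> Y S \<rightarrow> carrier (A S)" using C by (rule conjunct2[THEN conjunct2, THEN conjunct2, THEN conjunct1])
  show "{x \<in> Y S. F S x = \<one>\<^bsub>A S\<^esub>} = Yo S"
    using C by (rule conjunct2[THEN conjunct2, THEN conjunct2, THEN conjunct2, THEN conjunct1])
qed

lemma sysY: assumes "S \<subseteq> {1..d}" "S \<noteq> {}"
  shows "Y S = {x \<in> Xbar d X S. \<forall>T. T \<subset> S \<longrightarrow> xhat d X S x T \<subseteq> Yo T}"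
proof -
  have "S \<noteq> {} \<longrightarrow> Y S = {x \<in> Xbar d X S. \<forall>T. T \<subset> S \<longrightarrow> xhat d X S x T \<subseteq> Yo T}"
    using sys_at[OF assms(1)] by (rule conjunct2[THEN conjunct2, THEN conjunct2, THEN conjunct2, THEN conjunct2, THEN conjunct1])
  then show ?thesis using assms(2) by (rule mp)
qed

lemma sysAdd: assumes "S \<subseteq> {1..d}" "s \<in> S" "x1 \<in> Y S" "x2 \<in> Y S" "x3 \<in> Y S"
   "\<And>i. i \<noteq> s \<Longrightarrow> x1 i = x2 i \<and> x1 i = x3 i"
   "x1 s = Inr (p1, p2)" "x2 s = Inr (p2, p3)" "x3 s = Inr (p1, p3)"
  shows "F S x1 \<otimes>\<^bsub>A S\<^esub> F S x2 = F S x3"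
proof -
  have H: "\<forall>s \<in> S. \<forall>x1 x2 x3 p1 p2 p3.
            x1 \<in> Y S \<longrightarrow> x2 \<in> Y S \<longrightarrow> x3 \<in> Y S \<longrightarrow>
            (\<forall>i. i \<noteq> s \<longrightarrow> x1 i = x2 i \<and> x1 i = x3 i) \<longrightarrow>
            x1 s = Inr (p1, p2) \<longrightarrow> x2 s = Inr (p2, p3) \<longrightarrow> x3 s = Inr (p1, p3) \<longrightarrow>
            F S x1 \<otimes>\<^bsub>A S\<^esub> F S x2 = F S x3"
    using sys_at[OF assms(1)] by (rule conjunct2[THEN conjunct2, THEN conjunct2, THEN conjunct2, THEN conjunct2, THEN conjunct2])
  have "\<forall>i. i \<noteq> s \<longrightarrow> x1 i = x2 i \<and> x1 i = x3 i" using assms(6) by blast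
  show ?thesis by (rule H[rule_format, OF assms(2-9)])
qed

lemma face_X:
  assumes S: "S \<subseteq> {1..d}" and s: "s \<in> S" and S': "S' = S - {s}"
    and w: "w \<in> Wset d X S s" and \<delta>: "\<delta> \<in> Dset S'"
    and Xa: "a \<in> X s" and Xb: "b \<in> X s"
  shows "face S' s w \<delta> a b \<in> Xbar d X (Tset S' \<delta> \<union> {s})"
proof -
  let ?U = "Tset S' \<delta> \<union> {s}"
  let ?y = "face S' s w \<delta> a b"
  have S'sub: "S' \<subseteq> {1..d}" using S S' by auto
  have sd: "s \<in> {1..d}" using S s by auto
  have Usub: "?U \<subseteq> {1..d}" using S'sub sd unfolding Tset_def by auto
  have wS: "\<exists>p\<in>X i \<times> X i. w i = Inr p" if "i \<in> S'" for i
  proof -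
    have "i \<in> {1..d}-{s}" "i \<in> S" using that S' S by auto
    then have "w i \<in> Inr ` (X i \<times> X i)" using w unfolding Wset_def PiE_iff by metis
    then show ?thesis by blast
  qed
  have wO: "\<exists>c\<in>X i. w i = Inl c" if "i \<in> {1..d}" "i \<notin> S" for i
  proof -
    have "i \<in> {1..d}-{s}" using that s by auto
    then have "w i \<in> Inl ` X i" using w that unfolding Wset_def PiE_iff by metis
    then show ?thesis by blast
  qed
  have wU: "w i = undefined" if "i \<notin> {1..d} - {s}" for i
    using w that unfolding Wset_def PiE_iff extensional_def by auto
  have \<delta>v: "\<delta> i \<in> {0,1,2}" if "i \<in> S'" for i using \<delta> that unfolding Dset_def PiE_iff by blast
  show ?thesis
    unfolding Xbar_def PiE_iff
  proof (intro conjI ballI)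
    fix i assume i: "i \<in> {1..d}"
    show "?y i \<in> (if i \<in> ?U then Inr ` (X i \<times> X i) else Inl ` X i)"
    proof (cases "i \<in> S'")
      case True
      then obtain p where p: "p \<in> X i \<times> X i" "w i = Inr p" using wS by blast
      have "i \<noteq> s" using True S' by auto
      then show ?thesis using True p \<delta>v[OF True] unfolding face_def Tset_def by (auto simp: mem_Times_iff)
    next
      case False
      show ?thesis
      proof (cases "i = s")
        case True then show ?thesis using False Xa Xb unfolding face_def by auto
      next
        case False': False
        then have "i \<notin> S" using False S' by auto
        then obtain c where "c \<in> X i" "w i = Inl c" using wO i by blast
        then show ?thesis using False False' unfolding face_def Tset_def by auto
      qed
    qed
  next
    show "?y \<in> extensional {1..d}"
      unfolding extensional_def face_def using S'sub sd wU by auto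
  qed
qed

lemma face_Y:
  assumes S: "S \<subseteq> {1..d}" and s: "s \<in> S" and S': "S' = S - {s}"
    and w: "w \<in> Wset d X S s" and \<delta>: "\<delta> \<in> Dset S'"
    and a: "w(s := Inl a) \<in> Yo S'" and b: "w(s := Inl b) \<in> Yo S'"
    and below: "\<forall>\<delta>'\<in>Dset S'. prec S' \<delta>' \<delta> \<longrightarrow> face S' s w \<delta>' a b \<in> Yo (Tset S' \<delta>' \<union> {s})"
  shows "face S' s w \<delta> a b \<in> Y (Tset S' \<delta> \<union> {s})"
proof -
  let ?U = "Tset S' \<delta> \<union> {s}"
  let ?y = "face S' s w \<delta> a b"
  have S'sub: "S' \<subseteq> {1..d}" using S S' by auto
  have sd: "s \<in> {1..d}" using S s by auto
  have Usub: "?U \<subseteq> {1..d}" using S'sub sd unfolding Tset_def by auto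
  have wS: "\<exists>p\<in>X i \<times> X i. w i = Inr p" if "i \<in> S'" for i
  proof -
    have "i \<in> {1..d}-{s}" "i \<in> S" using that S' S by auto
    then have "w i \<in> Inr ` (X i \<times> X i)" using w unfolding Wset_def PiE_iff by metis
    then show ?thesis by blast
  qed
  have wO: "\<exists>c\<in>X i. w i = Inl c" if "i \<in> {1..d}" "i \<notin> S" for i
  proof -
    have "i \<in> {1..d}-{s}" using that s by auto
    then have "w i \<in> Inl ` X i" using w that unfolding Wset_def PiE_iff by metis
    then show ?thesis by blast
  qed
  have wU: "w i = undefined" if "i \<notin> {1..d} - {s}" for i
    using w that unfolding Wset_def PiE_iff extensional_def by auto
  have \<delta>v: "\<delta> i \<in> {0,1,2}" if "i \<in> S'" for i using \<delta> that unfolding Dset_def PiE_iff by blast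
  have Xa: "a \<in> X s" and Xb: "b \<in> X s"
  proof -
    have sS': "s \<notin> S'" using S' by auto
    have "w(s := Inl a) \<in> Xbar d X S'" using a sysS[OF S'sub] by auto
    then have "(w(s := Inl a)) s \<in> Inl ` X s" using Xbar_coord(2)[OF _ sd sS'] by blast
    then show "a \<in> X s" by auto
    have "w(s := Inl b) \<in> Xbar d X S'" using b sysS[OF S'sub] by auto
    then have "(w(s := Inl b)) s \<in> Inl ` X s" using Xbar_coord(2)[OF _ sd sS'] by blast
    then show "b \<in> X s" by auto
  qed
  have yX: "?y \<in> Xbar d X ?U" using face_X[OF S s S' w \<delta> Xa Xb] .
  have Une: "?U \<noteq> {}" by auto
  show ?thesis
    unfolding sysY[OF Usub Une]
  proof (intro CollectI conjI yX allI impI subsetI)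
    fix T z assume T: "T \<subset> ?U" and z: "z \<in> xhat d X ?U ?y T"
    have zX: "z \<in> Xbar d X T" and zch: "\<And>i. i \<in> ?U - T \<Longrightarrow> \<exists>p. ?y i = Inr p \<and> (z i = Inl (fst p) \<or> z i = Inl (snd p))"
      and zeq: "\<And>i. i \<in> {1..d} - (?U - T) \<Longrightarrow> z i = ?y i"
      using z unfolding xhat_def by auto
    have zU: "z i = undefined" if "i \<notin> {1..d}" for i
      using zX that unfolding Xbar_def PiE_iff extensional_def by auto
    show "z \<in> Yo T"
    proof (cases "s \<in> T")
      case True
      define \<delta>' where "\<delta>' = (\<lambda>i. if i \<in> S' then (if i \<in> ?U - T then (if z i = Inl (fst (projr (w i))) then 0 else 1) else \<delta> i) else undefined)"
      have \<delta>'D: "\<delta>' \<in> Dset S'" unfolding Dset_def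
      proof (rule PiE_I)
        fix i assume "i \<in> S'" then show "\<delta>' i \<in> {0,1,2}" using \<delta>v[of i] unfolding \<delta>'_def by auto
      next
        fix i assume "i \<notin> S'" then show "\<delta>' i = undefined" unfolding \<delta>'_def by simp
      qed
      obtain j where j: "j \<in> ?U - T" using T by auto
      have jS': "j \<in> S'" "\<delta> j = 2" using j True unfolding Tset_def by auto
      have "\<delta>' j \<noteq> 2" unfolding \<delta>'_def using j jS' by auto
      then have ne: "\<delta>' \<noteq> \<delta>" using jS' by auto
      have pr: "prec S' \<delta>' \<delta>" unfolding prec_def using ne True S' unfolding \<delta>'_def Tset_def by auto
      have fz: "face S' s w \<delta>' a b = z"
      proof
        fix i
        show "face S' s w \<delta>' a b i = z i"
        proof (cases "i \<in> S'")
          case iS: True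
          then have iss: "i \<noteq> s" "i \<in> {1..d}" using S' S'sub by auto
          show ?thesis
          proof (cases "i \<in> ?U - T")
            case iU: True
            then have "\<delta> i = 2" unfolding Tset_def using iss by auto
            obtain p where p: "?y i = Inr p" "z i = Inl (fst p) \<or> z i = Inl (snd p)" using zch[OF iU] by blast
            have "w i = Inr p" using p(1) iS \<open>\<delta> i = 2\<close> unfolding face_def by auto
            then show ?thesis using p(2) iS iU unfolding face_def \<delta>'_def by auto
          next
            case iU: False
            then have "z i = ?y i" using zeq iss by auto
            moreover have "\<delta>' i = \<delta> i" unfolding \<delta>'_def by (simp only: if_P[OF iS] if_not_P[OF iU])
            moreover have "face S' s w \<delta>' a b i = (if \<delta>' i = 0 then Inl (fst (projr (w i)))
                 else if \<delta>' i = 1 then Inl (snd (projr (w i))) else w i)" "?y i = (if \<delta> i = 0 then Inl (fst (projr (w i)))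
                 else if \<delta> i = 1 then Inl (snd (projr (w i))) else w i)" using iS unfolding face_def by simp_all
            ultimately show ?thesis by simp
          qed
        next
          case iS: False
          show ?thesis
          proof (cases "i \<in> {1..d}")
            case True
            then have "i \<notin> ?U - T" using iS \<open>s \<in> T\<close> unfolding Tset_def by auto
            then have "z i = ?y i" using zeq True by auto
            then show ?thesis using iS unfolding face_def by simp
          next
            case False
            then show ?thesis using zU[OF False] iS wU sd unfolding face_def by auto
          qed
        qed
      qed
      have TT: "Tset S' \<delta>' \<union> {s} = T"
      proof -
        have "Tset S' \<delta>' = Tset S' \<delta> - (?U - T)" unfolding Tset_def \<delta>'_def by auto
        then show ?thesis using T True by auto
      qed
      show ?thesis using below \<delta>'D pr fz TT by metis
    next
      case False
      have sU: "s \<in> ?U - T" using False by auto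
      obtain p where p: "?y s = Inr p" "z s = Inl (fst p) \<or> z s = Inl (snd p)" using zch[OF sU] by blast
      have sS': "s \<notin> S'" using S' by auto
      have "p = (a,b)" using p(1) sS' unfolding face_def by auto
      then obtain c where c: "z s = Inl c" "w(s := Inl c) \<in> Yo S'" using p(2) a b by auto
      let ?v = "w(s := Inl c)"
      have TS': "T \<subseteq> S'" using T False unfolding Tset_def by auto
      have zv: "z \<in> xhat d X S' ?v T"
        unfolding xhat_def
      proof (intro CollectI conjI ballI zX)
        fix i assume i: "i \<in> S' - T"
        then have iss: "i \<noteq> s" "i \<in> {1..d}" using S' S'sub by auto
        obtain q where q: "q \<in> X i \<times> X i" "w i = Inr q" using wS i by blast
        show "\<exists>p. ?v i = Inr p \<and> (z i = Inl (fst p) \<or> z i = Inl (snd p))"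
        proof (cases "i \<in> ?U")
          case True
          then have "\<delta> i = 2" using iss unfolding Tset_def by auto
          then show ?thesis using zch[of i] True i q iss unfolding face_def by auto
        next
          case False
          then have "\<delta> i \<noteq> 2" using i unfolding Tset_def by auto
          then have "\<delta> i = 0 \<or> \<delta> i = 1" using \<delta>v i by auto
          moreover have "z i = ?y i" using zeq iss False by auto
          ultimately show ?thesis using i q iss unfolding face_def by auto
        qed
      next
        fix i assume i: "i \<in> {1..d} - (S' - T)"
        show "z i = ?v i"
        proof (cases "i = s")
          case True then show ?thesis using c by simp
        next
          case False
          then have "i \<notin> ?U - T" using i TS' unfolding Tset_def by auto
          then have "z i = ?y i" using zeq i by auto
          moreover have "\<delta> i = 2" if "i \<in> S'"
          proof -
            have "i \<in> T" using i that by auto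
            then have "i \<in> Tset S' \<delta>" using T False by auto
            then show ?thesis unfolding Tset_def by auto
          qed
          ultimately show ?thesis using False unfolding face_def by auto
        qed
      qed
      show ?thesis
      proof (cases "T = S'")
        case True
        have "z = ?v"
        proof
          fix i show "z i = ?v i"
          proof (cases "i \<in> {1..d}")
            case True
            then show ?thesis using zv \<open>T = S'\<close> unfolding xhat_def by auto
          next
            case False
            then show ?thesis using zU wU sd by auto
          qed
        qed
        then show ?thesis using c True by simp
      next
        case False
        then have TS: "T \<subset> S'" using TS' by auto
        then have "S' \<noteq> {}" by auto
        then have "?v \<in> Y S'" using c(2) sysS[OF S'sub] by auto
        then have "xhat d X S' ?v T \<subseteq> Yo T" using sysY[OF S'sub \<open>S' \<noteq> {}\<close>] TS by auto
        then show ?thesis using zv by auto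
      qed
    qed
  qed
qed

lemma upd_in1:
  assumes S: "S \<subseteq> {1..d}" and s: "s \<in> S" and w: "w \<in> Wset d X S s" and c: "c \<in> X s"
  shows "w(s := Inl c) \<in> Xbar d X (S - {s})"
  unfolding Xbar_def PiE_iff
proof (intro conjI ballI)
  have w1: "w i \<in> (if i \<in> S then Inr ` (X i \<times> X i) else Inl ` X i)" if "i \<in> {1..d}" "i \<noteq> s" for i
    using w that unfolding Wset_def PiE_iff by blast
  fix i assume "i \<in> {1..d}"
  then show "(w(s := Inl c)) i \<in> (if i \<in> S - {s} then Inr ` (X i \<times> X i) else Inl ` X i)"
    using w1[of i] c by (cases "i = s") auto
next
  have "w i = undefined" if "i \<notin> {1..d}" for i
    using w that unfolding Wset_def PiE_iff extensional_def by blast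
  then show "w(s := Inl c) \<in> extensional {1..d}" using S s unfolding extensional_def by auto
qed

lemma upd_in2:
  assumes S: "S \<subseteq> {1..d}" and s: "s \<in> S" and w: "w \<in> Wset d X S s" and p: "p \<in> X s \<times> X s"
  shows "w(s := Inr p) \<in> Xbar d X S"
  unfolding Xbar_def PiE_iff
proof (intro conjI ballI)
  have w1: "w i \<in> (if i \<in> S then Inr ` (X i \<times> X i) else Inl ` X i)" if "i \<in> {1..d}" "i \<noteq> s" for i
    using w that unfolding Wset_def PiE_iff by blast
  fix i assume "i \<in> {1..d}"
  then show "(w(s := Inr p)) i \<in> (if i \<in> S then Inr ` (X i \<times> X i) else Inl ` X i)"
    using w1[of i] p s by (cases "i = s") auto
next
  have "w i = undefined" if "i \<notin> {1..d}" for i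
    using w that unfolding Wset_def PiE_iff extensional_def by blast
  then show "w(s := Inr p) \<in> extensional {1..d}" using S s unfolding extensional_def by auto
qed

lemma slice_char:
  assumes S: "S \<subseteq> {1..d}" and s: "s \<in> S" and S': "S' = S - {s}"
    and w: "w \<in> Wset d X S s" and Xa: "a \<in> X s" and Xb: "b \<in> X s"
  shows "w(s := Inr (a,b)) \<in> Yo S \<longleftrightarrow> (w(s := Inl a) \<in> Yo S' \<and> w(s := Inl b) \<in> Yo S' \<and>
      (\<forall>\<delta>\<in>Dset S'. face S' s w \<delta> a b \<in> Yo (Tset S' \<delta> \<union> {s})))"
proof
  let ?x = "w(s := Inr (a,b))"
  assume x: "?x \<in> Yo S"
  have Sne: "S \<noteq> {}" using s by auto
  have xY: "?x \<in> Y S" using x sysS[OF S] by auto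
  then have hat: "\<And>T. T \<subset> S \<Longrightarrow> xhat d X S ?x T \<subseteq> Yo T" using sysY[OF S Sne] by auto
  have sS': "s \<notin> S'" using S' by auto
  have wa: "w(s := Inl c) \<in> Yo S'" if "c = a \<or> c = b" for c
  proof -
    have cX: "c \<in> X s" using that Xa Xb by auto
    have "w(s := Inl c) \<in> xhat d X S ?x S'"
      unfolding xhat_def using upd_in1[OF S s w cX] S' s that by auto
    moreover have "S' \<subset> S" using S' s by auto
    ultimately show ?thesis using hat by auto
  qed
  have faces: "face S' s w \<delta> a b \<in> Yo (Tset S' \<delta> \<union> {s})" if \<delta>: "\<delta> \<in> Dset S'" for \<delta>
  proof (cases "Tset S' \<delta> \<union> {s} = S")
    case True
    then have "\<And>i. i \<in> S' \<Longrightarrow> \<delta> i = 2" using S' unfolding Tset_def by auto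
    then have "face S' s w \<delta> a b = ?x" unfolding face_def using sS' by (auto simp: fun_eq_iff)
    then show ?thesis using True x by simp
  next
    case False
    then have sub: "Tset S' \<delta> \<union> {s} \<subset> S" using S' s unfolding Tset_def by auto
    have fX: "face S' s w \<delta> a b \<in> Xbar d X (Tset S' \<delta> \<union> {s})"
      by (rule face_X[OF S s S' w \<delta> Xa Xb])
    have "face S' s w \<delta> a b \<in> xhat d X S ?x (Tset S' \<delta> \<union> {s})"
      unfolding xhat_def
    proof (intro CollectI conjI ballI fX)
      fix i assume i: "i \<in> S - (Tset S' \<delta> \<union> {s})"
      then have iS': "i \<in> S'" "i \<noteq> s" "\<delta> i \<noteq> 2" using S' unfolding Tset_def by auto
      have dd: "\<delta> i \<in> {0,1,2}" using \<delta> iS'(1) unfolding Dset_def PiE_iff by blast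
      have i1: "i \<in> {1..d} - {s}" "i \<in> S" using iS'(1,2) S S' by auto
      have "w i \<in> Inr ` (X i \<times> X i)" using w i1 unfolding Wset_def PiE_iff by metis
      then obtain q where q: "w i = Inr q" by blast
      have fi: "face S' s w \<delta> a b i = Inl (fst q) \<or> face S' s w \<delta> a b i = Inl (snd q)"
        using iS' q dd unfolding face_def by auto
      have xi: "?x i = Inr q" using q iS'(2) by simp
      show "\<exists>p. ?x i = Inr p \<and> (face S' s w \<delta> a b i = Inl (fst p) \<or> face S' s w \<delta> a b i = Inl (snd p))"
        using fi xi by blast
    next
      fix i assume i: "i \<in> {1..d} - (S - (Tset S' \<delta> \<union> {s}))"
      show "face S' s w \<delta> a b i = ?x i"
      proof (cases "i \<in> S'")
        case True
        then have "\<delta> i = 2" using i S' unfolding Tset_def by auto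
        then show ?thesis using True S' unfolding face_def by auto
      next
        case False
        then show ?thesis unfolding face_def by auto
      qed
    qed
    then show ?thesis using hat[OF sub] by (rule subsetD[rotated])
  qed
  show "w(s := Inl a) \<in> Yo S' \<and> w(s := Inl b) \<in> Yo S' \<and>
      (\<forall>\<delta>\<in>Dset S'. face S' s w \<delta> a b \<in> Yo (Tset S' \<delta> \<union> {s}))"
    using wa[of a] wa[of b] faces by blast
next
  assume H: "w(s := Inl a) \<in> Yo S' \<and> w(s := Inl b) \<in> Yo S' \<and>
      (\<forall>\<delta>\<in>Dset S'. face S' s w \<delta> a b \<in> Yo (Tset S' \<delta> \<union> {s}))"
  define \<delta>0 where "\<delta>0 = restrict (\<lambda>_. 2::nat) S'"
  have D0: "\<delta>0 \<in> Dset S'" unfolding \<delta>0_def Dset_def by auto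
  have T0: "Tset S' \<delta>0 \<union> {s} = S" unfolding Tset_def \<delta>0_def using S' s by auto
  have "face S' s w \<delta>0 a b = w(s := Inr (a,b))"
    unfolding face_def \<delta>0_def using S' by (auto simp: fun_eq_iff)
  then show "w(s := Inr (a,b)) \<in> Yo S" using H D0 T0 by metis
qed

lemma slice_count:
  assumes S: "S \<subseteq> {1..d}" and s: "s \<in> S" and S': "S' = S - {s}"
    and w: "w \<in> Wset d X S s" and finXs: "finite (X s)"
    and finA: "\<And>T. T \<subseteq> {1..d} \<Longrightarrow> finite (carrier (A T))"
    and M: "\<And>T. T \<subseteq> {1..d} \<Longrightarrow> card (carrier (A T)) \<le> M"
  shows "card {c \<in> X s. w(s := Inl c) \<in> Yo S'} ^ 2
         \<le> card {p \<in> X s \<times> X s. w(s := Inr p) \<in> Yo S} * M ^ (3 ^ card S')"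
proof -
  let ?V = "{c \<in> X s. w(s := Inl c) \<in> Yo S'}"
  let ?D = "Dset S'"
  let ?Q = "\<lambda>\<delta> a b. face S' s w \<delta> a b \<in> Yo (Tset S' \<delta> \<union> {s})"
  let ?G = "\<lambda>\<delta>. A (Tset S' \<delta> \<union> {s})"
  let ?f = "\<lambda>\<delta> a b. F (Tset S' \<delta> \<union> {s}) (face S' s w \<delta> a b)"
  have finS': "finite S'" using S S' finite_subset by blast
  have Usub: "Tset S' \<delta> \<union> {s} \<subseteq> {1..d}" for \<delta> using S S' s unfolding Tset_def by auto
  have finV: "finite ?V" using finXs by auto
  have Vdef: "c \<in> ?V \<Longrightarrow> c \<in> X s \<and> w(s := Inl c) \<in> Yo S'" for c by auto
  have "\<exists>L :: 'a \<Rightarrow> 'b list. (\<forall>a b. (a \<in> ?V \<and> b \<in> ?V \<and> (\<forall>x\<in>?D. ?Q x a b)) \<longleftrightarrow> (a \<in> ?V \<and> b \<in> ?V \<and> L a = L b))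
    \<and> card (L ` ?V) \<le> M ^ card ?D"
  proof (rule chain[where V="?V" and D="?D" and Q="?Q" and prec="prec S'" and rk="\<lambda>\<delta>. card (Tset S' \<delta>)" and G="?G" and f="?f" and M=M])
    show "finite ?V" by (rule finV)
    show "finite ?D" using finS' by (rule finite_Dset)
    show "\<And>x y. x \<in> ?D \<Longrightarrow> y \<in> ?D \<Longrightarrow> prec S' x y \<Longrightarrow> card (Tset S' x) < card (Tset S' y)"
      by (rule prec_rk[OF finS'])
    show "\<And>x. x \<in> ?D \<Longrightarrow> group (?G x)" using sysS(1)[OF Usub] by (simp add: comm_group_def)
    show "\<And>x. x \<in> ?D \<Longrightarrow> finite (carrier (?G x))" using finA[OF Usub] by blast
    show "\<And>x. x \<in> ?D \<Longrightarrow> card (carrier (?G x)) \<le> M" using M[OF Usub] by blast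
  next
    fix x a b assume x: "x \<in> ?D" and a: "a \<in> ?V" and b: "b \<in> ?V" and bl: "\<forall>y\<in>?D. prec S' y x \<longrightarrow> ?Q y a b"
    have fY: "face S' s w x a b \<in> Y (Tset S' x \<union> {s})"
      using face_Y[OF S s S' w x _ _ bl] a b by auto
    have c1: "?f x a b \<in> carrier (?G x)" using sysS(4)[OF Usub[of x]] fY by (rule funcset_mem)
    have e: "Yo (Tset S' x \<union> {s}) = {y \<in> Y (Tset S' x \<union> {s}). F (Tset S' x \<union> {s}) y = \<one>\<^bsub>?G x\<^esub>}"
      using sysS(5)[OF Usub[of x]] by simp
    have "?Q x a b \<longleftrightarrow> ?f x a b = \<one>\<^bsub>?G x\<^esub>" unfolding e using fY by simp
    then show "?f x a b \<in> carrier (?G x) \<and> (?Q x a b \<longleftrightarrow> ?f x a b = \<one>\<^bsub>?G x\<^esub>)" using c1 by blast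
  next
    fix x a b c assume x: "x \<in> ?D" and a: "a \<in> ?V" and b: "b \<in> ?V" and c: "c \<in> ?V"
      and bl: "\<forall>y\<in>?D. prec S' y x \<longrightarrow> ?Q y a b \<and> ?Q y b c \<and> ?Q y a c"
    have f1: "face S' s w x a b \<in> Y (Tset S' x \<union> {s})"
      using face_Y[OF S s S' w x, of a b] a b bl by auto
    have f2: "face S' s w x b c \<in> Y (Tset S' x \<union> {s})"
      using face_Y[OF S s S' w x, of b c] c b bl by auto
    have f3: "face S' s w x a c \<in> Y (Tset S' x \<union> {s})"
      using face_Y[OF S s S' w x, of a c] a c bl by auto
    have sS': "s \<notin> S'" using S' by auto
    show "?f x a b \<otimes>\<^bsub>?G x\<^esub> ?f x b c = ?f x a c"
    proof (rule sysAdd[OF Usub _ f1 f2 f3])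
      show "s \<in> Tset S' x \<union> {s}" by simp
      show "\<And>i. i \<noteq> s \<Longrightarrow> face S' s w x a b i = face S' s w x b c i \<and> face S' s w x a b i = face S' s w x a c i"
        using face_offs by metis
      show "face S' s w x a b s = Inr (a, b)" "face S' s w x b c s = Inr (b, c)" "face S' s w x a c s = Inr (a, c)"
        by (rule face_s[OF sS'])+
    qed
  qed
  then obtain L :: "'a \<Rightarrow> 'b list" where L: "\<forall>a b. (a \<in> ?V \<and> b \<in> ?V \<and> (\<forall>x\<in>?D. ?Q x a b)) \<longleftrightarrow> (a \<in> ?V \<and> b \<in> ?V \<and> L a = L b)"
    and cL: "card (L ` ?V) \<le> M ^ card ?D" by blast
  have eq: "{p \<in> X s \<times> X s. w(s := Inr p) \<in> Yo S} = {(a,b). a \<in> ?V \<and> b \<in> ?V \<and> L a = L b}"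
  proof -
    have "{p \<in> X s \<times> X s. w(s := Inr p) \<in> Yo S} = {(a,b). a \<in> ?V \<and> b \<in> ?V \<and> (\<forall>x\<in>?D. ?Q x a b)}"
      using slice_char[OF S s S' w] by auto
    then show ?thesis using L by auto
  qed
  have "card ?V ^ 2 \<le> card {(a,b). a \<in> ?V \<and> b \<in> ?V \<and> L a = L b} * card (L ` ?V)"
    by (rule cs_label[OF finV])
  also have "\<dots> \<le> card {(a,b). a \<in> ?V \<and> b \<in> ?V \<and> L a = L b} * M ^ (3 ^ card S')"
    using cL card_Dset[OF finS'] by simp
  finally show ?thesis unfolding eq .
qed

end



context
  fixes d :: nat and X :: "nat \<Rightarrow> 'a set"
    and Y Yo :: "nat set \<Rightarrow> (nat \<Rightarrow> 'a + 'a \<times> 'a) set"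
    and F :: "nat set \<Rightarrow> (nat \<Rightarrow> 'a + 'a \<times> 'a) \<Rightarrow> 'b"
    and A :: "nat set \<Rightarrow> 'b monoid"
  assumes sys: "additive_restrictive_system d X Y Yo F A"
begin

lemma restr_W:
  assumes x: "x \<in> Xbar d X T" and TS: "T - {s} = S - {s}"
  shows "x(s := undefined) \<in> Wset d X S s"
  unfolding Wset_def PiE_iff
proof (intro conjI ballI)
  fix i assume i: "i \<in> {1..d} - {s}"
  then have "x i \<in> (if i \<in> T then Inr ` (X i \<times> X i) else Inl ` X i)"
    using x unfolding Xbar_def PiE_iff by blast
  moreover have "i \<in> T \<longleftrightarrow> i \<in> S" using i TS by blast
  ultimately show "(x(s := undefined)) i \<in> (if i \<in> S then Inr ` (X i \<times> X i) else Inl ` X i)"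
    using i by auto
next
  have "x i = undefined" if "i \<notin> {1..d}" for i
    using x that unfolding Xbar_def PiE_iff extensional_def by blast
  then show "x(s := undefined) \<in> extensional ({1..d} - {s})" unfolding extensional_def by auto
qed

lemma W_s: assumes "w \<in> Wset d X S s" shows "w s = undefined"
  using PiE_arb[OF assms[unfolded Wset_def], of s] by simp

lemma decomp_r:
  assumes S: "S \<subseteq> {1..d}" and s: "s \<in> S" and Z: "Z \<subseteq> Xbar d X S"
  shows "Z = (\<lambda>(w,p). w(s := Inr p)) ` (SIGMA w:Wset d X S s. {p \<in> X s \<times> X s. w(s := Inr p) \<in> Z})"
    and "inj_on (\<lambda>(w,p). w(s := Inr p)) (SIGMA w:Wset d X S s. {p \<in> X s \<times> X s. w(s := Inr p) \<in> Z})"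
proof -
  show "Z = (\<lambda>(w,p). w(s := Inr p)) ` (SIGMA w:Wset d X S s. {p \<in> X s \<times> X s. w(s := Inr p) \<in> Z})"
  proof
    show "Z \<subseteq> (\<lambda>(w,p). w(s := Inr p)) ` (SIGMA w:Wset d X S s. {p \<in> X s \<times> X s. w(s := Inr p) \<in> Z})"
    proof
      fix x assume xZ: "x \<in> Z"
      then have xX: "x \<in> Xbar d X S" using Z by auto
      have sd: "s \<in> {1..d}" using S s by auto
      have "x s \<in> Inr ` (X s \<times> X s)" by (rule Xbar_coord(1)[OF xX sd s])
      then obtain p where p: "p \<in> X s \<times> X s" "x s = Inr p" by blast
      have w: "x(s := undefined) \<in> Wset d X S s" by (rule restr_W[OF xX]) simp
      have e: "(x(s := undefined))(s := Inr p) = x" using p by auto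
      show "x \<in> (\<lambda>(w,p). w(s := Inr p)) ` (SIGMA w:Wset d X S s. {p \<in> X s \<times> X s. w(s := Inr p) \<in> Z})"
        using w p e xZ by (intro image_eqI[of _ _ "(x(s := undefined), p)"]) auto
    qed
  qed auto
  show "inj_on (\<lambda>(w,p). w(s := Inr p)) (SIGMA w:Wset d X S s. {p \<in> X s \<times> X s. w(s := Inr p) \<in> Z})"
  proof (rule inj_onI, clarify)
    fix w p w' p' assume w: "w \<in> Wset d X S s" and w': "w' \<in> Wset d X S s" and e: "w(s := Inr p) = w'(s := Inr p')"
    have "w = w'"
    proof
      fix i show "w i = w' i"
      proof (cases "i = s")
        case True then show ?thesis using W_s[OF w] W_s[OF w'] by simp
      next
        case False then show ?thesis using fun_cong[OF e, of i] by simp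
      qed
    qed
    moreover have "p = p'" using fun_cong[OF e, of s] by simp
    ultimately show "w = w' \<and> p = p'" by simp
  qed
qed

lemma decomp_l:
  assumes S: "S \<subseteq> {1..d}" and s: "s \<in> S" and Z: "Z \<subseteq> Xbar d X (S - {s})"
  shows "Z = (\<lambda>(w,c). w(s := Inl c)) ` (SIGMA w:Wset d X S s. {c \<in> X s. w(s := Inl c) \<in> Z})"
    and "inj_on (\<lambda>(w,c). w(s := Inl c)) (SIGMA w:Wset d X S s. {c \<in> X s. w(s := Inl c) \<in> Z})"
proof -
  show "Z = (\<lambda>(w,c). w(s := Inl c)) ` (SIGMA w:Wset d X S s. {c \<in> X s. w(s := Inl c) \<in> Z})"
  proof
    show "Z \<subseteq> (\<lambda>(w,c). w(s := Inl c)) ` (SIGMA w:Wset d X S s. {c \<in> X s. w(s := Inl c) \<in> Z})"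
    proof
      fix x assume xZ: "x \<in> Z"
      then have xX: "x \<in> Xbar d X (S - {s})" using Z by auto
      have sd: "s \<in> {1..d}" using S s by auto
      have "x s \<in> Inl ` X s" by (rule Xbar_coord(2)[OF xX sd]) simp
      then obtain c where c: "c \<in> X s" "x s = Inl c" by blast
      have w: "x(s := undefined) \<in> Wset d X S s" by (rule restr_W[OF xX]) auto
      have e: "(x(s := undefined))(s := Inl c) = x" using c by auto
      show "x \<in> (\<lambda>(w,c). w(s := Inl c)) ` (SIGMA w:Wset d X S s. {c \<in> X s. w(s := Inl c) \<in> Z})"
        using w c e xZ by (intro image_eqI[of _ _ "(x(s := undefined), c)"]) auto
    qed
  qed auto
  show "inj_on (\<lambda>(w,c). w(s := Inl c)) (SIGMA w:Wset d X S s. {c \<in> X s. w(s := Inl c) \<in> Z})"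
  proof (rule inj_onI, clarify)
    fix w p w' p' assume w: "w \<in> Wset d X S s" and w': "w' \<in> Wset d X S s" and e: "w(s := Inl p) = w'(s := Inl p')"
    have "w = w'"
    proof
      fix i show "w i = w' i"
      proof (cases "i = s")
        case True then show ?thesis using W_s[OF w] W_s[OF w'] by simp
      next
        case False then show ?thesis using fun_cong[OF e, of i] by simp
      qed
    qed
    moreover have "p = p'" using fun_cong[OF e, of s] by simp
    ultimately show "w = w' \<and> p = p'" by simp
  qed
qed

lemma step_count:
  assumes S: "S \<subseteq> {1..d}" and s: "s \<in> S"
    and finX: "\<And>i. i \<in> {1..d} \<Longrightarrow> finite (X i)"
    and finA: "\<And>T. T \<subseteq> {1..d} \<Longrightarrow> finite (carrier (A T))"
    and M: "\<And>T. T \<subseteq> {1..d} \<Longrightarrow> card (carrier (A T)) \<le> M"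
  shows "card (Yo (S - {s})) ^ 2 \<le> card (Wset d X S s) * M ^ (3 ^ card (S - {s})) * card (Yo S)"
    and "card (Xbar d X S) = card (Wset d X S s) * card (X s) ^ 2"
    and "card (Xbar d X (S - {s})) = card (Wset d X S s) * card (X s)"
proof -
  let ?W = "Wset d X S s"
  let ?S' = "S - {s}"
  let ?K = "M ^ (3 ^ card ?S')"
  let ?R = "\<lambda>Z w. {p \<in> X s \<times> X s. w(s := Inr p) \<in> Z}"
  let ?V = "\<lambda>Z w. {c \<in> X s. w(s := Inl c) \<in> Z}"
  have sd: "s \<in> {1..d}" using S s by auto
  have S'sub: "?S' \<subseteq> {1..d}" using S by auto
  have finW: "finite ?W" unfolding Wset_def using finX by (intro finite_PiE) auto
  have finXs: "finite (X s)" using finX sd by auto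
  have cardR: "card Z = (\<Sum>w\<in>?W. card (?R Z w))" if "Z \<subseteq> Xbar d X S" for Z
  proof -
    have "card Z = card ((\<lambda>(w,p). w(s := Inr p)) ` (SIGMA w:?W. ?R Z w))"
      using decomp_r(1)[OF S s that] by (rule arg_cong)
    also have "\<dots> = card (SIGMA w:?W. ?R Z w)" by (rule card_image[OF decomp_r(2)[OF S s that]])
    also have "\<dots> = (\<Sum>w\<in>?W. card (?R Z w))" using finW finXs by (intro card_SigmaI) auto
    finally show ?thesis .
  qed
  have cardV: "card Z = (\<Sum>w\<in>?W. card (?V Z w))" if "Z \<subseteq> Xbar d X ?S'" for Z
  proof -
    have "card Z = card ((\<lambda>(w,p). w(s := Inl p)) ` (SIGMA w:?W. ?V Z w))"
      using decomp_l(1)[OF S s that] by (rule arg_cong)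
    also have "\<dots> = card (SIGMA w:?W. ?V Z w)" by (rule card_image[OF decomp_l(2)[OF S s that]])
    also have "\<dots> = (\<Sum>w\<in>?W. card (?V Z w))" using finW finXs by (intro card_SigmaI) auto
    finally show ?thesis .
  qed
  have YoS: "Yo S \<subseteq> Xbar d X S" using sysS(2,3)[OF sys S] by blast
  have YoS': "Yo ?S' \<subseteq> Xbar d X ?S'" using sysS(2,3)[OF sys S'sub] by blast
  have "card (Xbar d X S) = (\<Sum>w\<in>?W. card (?R (Xbar d X S) w))" by (rule cardR) simp
  also have "\<dots> = (\<Sum>w\<in>?W. card (X s) ^ 2)"
  proof (rule sum.cong[OF refl])
    fix w assume w: "w \<in> ?W"
    have "?R (Xbar d X S) w = X s \<times> X s" using upd_in2[OF sys S s w] by auto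
    then show "card (?R (Xbar d X S) w) = card (X s) ^ 2" by (simp add: card_cartesian_product power2_eq_square)
  qed
  finally show "card (Xbar d X S) = card ?W * card (X s) ^ 2" by simp
  have "card (Xbar d X ?S') = (\<Sum>w\<in>?W. card (?V (Xbar d X ?S') w))" by (rule cardV) simp
  also have "\<dots> = (\<Sum>w\<in>?W. card (X s))"
  proof (rule sum.cong[OF refl])
    fix w assume w: "w \<in> ?W"
    have "?V (Xbar d X ?S') w = X s" using upd_in1[OF sys S s w] by auto
    then show "card (?V (Xbar d X ?S') w) = card (X s)" by simp
  qed
  finally show "card (Xbar d X ?S') = card ?W * card (X s)" by simp
  have per: "card (?V (Yo ?S') w) ^ 2 \<le> card (?R (Yo S) w) * ?K" if w: "w \<in> ?W" for w
    using slice_count[OF sys S s refl w finXs finA M] by simp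
  have "card (Yo ?S') ^ 2 = (\<Sum>w\<in>?W. card (?V (Yo ?S') w)) ^ 2" using cardV[OF YoS'] by simp
  also have "\<dots> \<le> card ?W * (\<Sum>w\<in>?W. card (?V (Yo ?S') w) ^ 2)" by (rule cs_nat[OF finW])
  also have "\<dots> \<le> card ?W * (\<Sum>w\<in>?W. card (?R (Yo S) w) * ?K)"
    using per by (intro mult_le_mono2 sum_mono) auto
  also have "\<dots> = card ?W * ?K * card (Yo S)"
    using cardR[OF YoS] by (simp add: sum_distrib_right[symmetric])
  finally show "card (Yo ?S') ^ 2 \<le> card ?W * ?K * card (Yo S)" .
qed

lemma step_density:
  assumes S: "S \<subseteq> {1..d}" and s: "s \<in> S"
    and finX: "\<And>i. i \<in> {1..d} \<Longrightarrow> finite (X i)"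
    and finA: "\<And>T. T \<subseteq> {1..d} \<Longrightarrow> finite (carrier (A T))"
    and M: "\<And>T. T \<subseteq> {1..d} \<Longrightarrow> card (carrier (A T)) \<le> M" and M1: "1 \<le> M"
  shows "density (Yo (S - {s})) (Xbar d X (S - {s})) ^ 2 / real M ^ (3 ^ card (S - {s}))
         \<le> density (Yo S) (Xbar d X S)"
proof -
  define a where "a = real (card (Yo S))"
  define b where "b = real (card (Yo (S - {s})))"
  define W where "W = real (card (Wset d X S s))"
  define n where "n = real (card (X s))"
  define K where "K = real M ^ (3 ^ card (S - {s}))"
  note sc = step_count[OF S s finX finA M]
  have K0: "K > 0" unfolding K_def using M1 by simp
  have "real (card (Yo (S - {s})) ^ 2) \<le> real (card (Wset d X S s) * M ^ (3 ^ card (S - {s})) * card (Yo S))"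
    using sc(1) by (simp only: of_nat_le_iff)
  then have key: "b ^ 2 \<le> W * K * a" unfolding a_def b_def W_def K_def by simp
  have d1: "density (Yo S) (Xbar d X S) = a / (W * n ^ 2)"
    using sc(2) by (simp add: density_def a_def W_def n_def)
  have d2: "density (Yo (S - {s})) (Xbar d X (S - {s})) = b / (W * n)"
    using sc(3) by (simp add: density_def b_def W_def n_def)
  have a0: "a \<ge> 0" "W \<ge> 0" "n \<ge> 0" unfolding a_def W_def n_def by auto
  show ?thesis unfolding d1 d2 K_def[symmetric]
  proof (cases "W * n = 0")
    case True
    then show "(b / (W * n))\<^sup>2 / K \<le> a / (W * n\<^sup>2)" using a0 by (auto simp: power2_eq_square)
  next
    case False
    then have pos: "W > 0" "n > 0" using a0 by (auto simp: less_le)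
    have "(b / (W * n))\<^sup>2 / K = b ^ 2 / (W ^ 2 * n ^ 2 * K)" by (simp add: power_divide power_mult_distrib)
    also have "\<dots> \<le> (W * K * a) / (W ^ 2 * n ^ 2 * K)"
      using key pos K0 by (intro divide_right_mono) auto
    also have "\<dots> = a / (W * n\<^sup>2)" using pos K0 by (simp add: field_simps power2_eq_square)
    finally show "(b / (W * n))\<^sup>2 / K \<le> a / (W * n\<^sup>2)" .
  qed
qed

end



theorem proposition3p2:
  fixes d :: nat and X :: "nat \<Rightarrow> 'a set"
    and Y Yo :: "nat set \<Rightarrow> (nat \<Rightarrow> 'a + 'a \<times> 'a) set"
    and F :: "nat set \<Rightarrow> (nat \<Rightarrow> 'a + 'a \<times> 'a) \<Rightarrow> 'b"
    and A :: "nat set \<Rightarrow> 'b monoid"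
  assumes finX: "\<And>i. i \<in> {1..d} \<Longrightarrow> finite (X i)"
    and finA: "\<And>S. S \<subseteq> {1..d} \<Longrightarrow> finite (carrier (A S))"
    and sys: "additive_restrictive_system d X Y Yo F A"
  shows "\<forall>S \<subseteq> {1..d}.
           density (Yo S) (Xbar d X S)
             \<ge> density (Yo {}) (Xbar d X {}) ^ (2 ^ card S)
                 / real (Max {card (carrier (A T)) | T. T \<subseteq> {1..d}}) ^ (3 ^ card S)"
proof -
  define M where "M = Max {card (carrier (A T)) | T. T \<subseteq> {1..d}}"
  have seteq: "{card (carrier (A T)) | T. T \<subseteq> {1..d}} = (\<lambda>T. card (carrier (A T))) ` Pow {1..d}" by auto
  have finset: "finite {card (carrier (A T)) | T. T \<subseteq> {1..d}}" unfolding seteq by simp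
  have Mge: "card (carrier (A T)) \<le> M" if "T \<subseteq> {1..d}" for T
    unfolding M_def using finset that by (intro Max_ge) auto
  have M1: "1 \<le> M"
  proof -
    have "comm_group (A {})" using sysS(1)[OF sys, of "{}"] by simp
    then have "group (A {})" by (simp add: comm_group_def)
    then have "\<one>\<^bsub>A {}\<^esub> \<in> carrier (A {})" by (simp add: group.is_monoid monoid.one_closed)
    then have "carrier (A {}) \<noteq> {}" by auto
    then have "card (carrier (A {})) \<ge> 1" using finA[of "{}"] by (simp add: Suc_le_eq card_gt_0_iff)
    then show ?thesis using Mge[of "{}"] by simp
  qed
  define \<delta> where "\<delta> = density (Yo {}) (Xbar d X {})"
  have \<delta>0: "\<delta> \<ge> 0" unfolding \<delta>_def density_def by simp
  have Mpos: "real M > 0" using M1 by simp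
  have main: "\<forall>S. S \<subseteq> {1..d} \<longrightarrow> card S = k \<longrightarrow>
      density (Yo S) (Xbar d X S) \<ge> \<delta> ^ (2 ^ k) / real M ^ (3 ^ k)" for k
  proof (induction k)
    case 0
    show ?case
    proof (intro allI impI)
      fix S :: "nat set" assume S: "S \<subseteq> {1..d}" "card S = 0"
      then have "S = {}" using finite_subset[OF S(1)] by auto
      moreover have "\<delta> / real M \<le> \<delta>" using \<delta>0 M1 by (simp add: divide_le_eq mult_le_cancel_left1)
      ultimately show "density (Yo S) (Xbar d X S) \<ge> \<delta> ^ (2 ^ 0) / real M ^ (3 ^ 0)"
        unfolding \<delta>_def by simp
    qed
  next
    case (Suc k)
    show ?case
    proof (intro allI impI)
      fix S :: "nat set" assume S: "S \<subseteq> {1..d}" "card S = Suc k"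
      then obtain s where s: "s \<in> S" by (metis card.empty ex_in_conv nat.distinct(1))
      have finS: "finite S" using finite_subset[OF S(1)] by auto
      have cS': "card (S - {s}) = k" using S(2) s finS by simp
      have S'sub: "S - {s} \<subseteq> {1..d}" using S(1) by auto
      let ?d' = "density (Yo (S - {s})) (Xbar d X (S - {s}))"
      have ih: "?d' \<ge> \<delta> ^ (2 ^ k) / real M ^ (3 ^ k)" using Suc.IH S'sub cS' by blast
      have nn: "0 \<le> \<delta> ^ (2 ^ k) / real M ^ (3 ^ k)" using \<delta>0 Mpos by simp
      have st: "?d' ^ 2 / real M ^ (3 ^ k) \<le> density (Yo S) (Xbar d X S)"
        using step_density[OF sys S(1) s finX finA Mge M1] cS' by simp
      have "(\<delta> ^ (2 ^ k) / real M ^ (3 ^ k)) ^ 2 \<le> ?d' ^ 2"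
        using ih nn by (intro power_mono) auto
      then have "(\<delta> ^ (2 ^ k) / real M ^ (3 ^ k)) ^ 2 / real M ^ (3 ^ k) \<le> ?d' ^ 2 / real M ^ (3 ^ k)"
        using Mpos by (intro divide_right_mono) auto
      also note st
      also have "(\<delta> ^ (2 ^ k) / real M ^ (3 ^ k)) ^ 2 / real M ^ (3 ^ k) = \<delta> ^ (2 ^ Suc k) / real M ^ (3 ^ Suc k)"
      proof -
        have e1: "\<delta> ^ (2 ^ Suc k) = (\<delta> ^ (2 ^ k)) ^ 2" by (simp add: power_mult[symmetric] mult.commute)
        have e2: "real M ^ (3 ^ Suc k) = (real M ^ (3 ^ k)) ^ 2 * real M ^ (3 ^ k)"
        proof -
          have "(3::nat) ^ Suc k = 3 ^ k * 2 + 3 ^ k" by simp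
          then show ?thesis by (simp only: power_add power_mult)
        qed
        show ?thesis unfolding e1 e2 by (simp add: power_divide)
      qed
      finally show "density (Yo S) (Xbar d X S) \<ge> \<delta> ^ (2 ^ Suc k) / real M ^ (3 ^ Suc k)" .
    qed
  qed
  show ?thesis unfolding M_def[symmetric] \<delta>_def[symmetric] using main by blast
qed


end
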